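(* Let $0\leq\alpha<1$, $0<\epsilon<1-\alpha$, and let $\beta\geq1$ and $\lambda>0$ satisfy $0<\lambda<\min\{\epsilon,\frac1\beta\}\big(\frac{2}{\operatorname{diam}(\Omega)}\big)^{\beta-1}$. Let $\mu$ be a doubling measure on $\mathbb{R}^d$, $\Omega\subset\mathbb{R}^d$ a bounded convex domain and $r$ an admissible radius function in $\Omega$ satisfying $|r(x)-r(y)|\leq|x-y|$ for all $x,y\in\Omega$ and $\lambda\operatorname{dist}(x,\partial\Omega)^\beta\leq r(x)\leq\epsilon\operatorname{dist}(x,\partial\Omega)$ for all $x\in\Omega$. For $n\in\mathbb{N}$ let $\Omega_n=\{x\in\Omega:\operatorname{dist}(x,\partial\Omega)>(1-\epsilon)^n\}$, and let $n_0=n_0(\epsilon,\Omega)$ be such that $\operatorname{diam}(\Omega_n)\geq\frac12\operatorname{diam}(\Omega)$ for all $n\geq n_0$. Then there are constants $C>0$ and $0<\theta\leq1$, depending only on $\mu$ and $d$, such that for every $u\in C(\overline{\Omega})$, every $n\geq n_0$ and every $0\leq t\leq\frac12\operatorname{diam}(\Omega)$, $$\omega_{T_\alpha u,\Omega_n}(t)\leq \alpha\,\omega_{u,\Omega_{n+1}}(t) + (1-\alpha)\,C\,\|u\|_\infty\,\lambda^{-\theta}(1-\epsilon)^{-n\beta\theta}\,t^{\theta}.$$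
   Context: A doubling measure on $\mathbb{R}^d$ is a positive Borel measure $\mu$ with $0<\mu(B)<\infty$ for every open ball $B$ and $\mu(B(a,2s))\leq D\mu(B(a,s))$ for some $D\geq1$ and all $a$, $s>0$. An admissible radius function in $\Omega$ is $r:\Omega\to(0,\infty)$ with $0<r(x)\leq\operatorname{dist}(x,\partial\Omega)$; $B_x=B(x,r(x))$ (open ball). For $x\in\Omega$: $Su(x)=\frac12(\sup_{B_x}u+\inf_{B_x}u)$, $Mu(x)=\frac{1}{\mu(B_x)}\int_{B_x}u\,d\mu$, $T_\alpha=\alpha S+(1-\alpha)M$. A concave modulus of continuity is a non-decreasing concave $\omega:[0,\infty)\to[0,\infty)$ with $\omega(0)=0$; for a convex set $E$ and $v$ continuous on $E$, $\omega_{v,E}$ is the lowest concave modulus of continuity of $v$ on $E$, so $|v(x)-v(y)|\leq\omega_{v,E}(|x-y|)$ for $x,y\in E$. $\|u\|_\infty$ is the supremum norm on $\overline{\Omega}$. *)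

theory Defs
  imports "HOL-Analysis.Analysis" "HOL-Probability.Probability"
begin

text \<open>Doubling measure on the euclidean space 'a (= R^d with d = DIM('a)).\<close>
definition doubling_measure :: "'a::euclidean_space measure \<Rightarrow> bool" where
  "doubling_measure \<mu> \<longleftrightarrow>
     sets \<mu> = sets borel \<and>
     (\<forall>a s. s > 0 \<longrightarrow> 0 < emeasure \<mu> (ball a s) \<and> emeasure \<mu> (ball a s) < \<infinity>) \<and>
     (\<exists>D::real. D \<ge> 1 \<and> (\<forall>a s. s > 0 \<longrightarrow>
         emeasure \<mu> (ball a (2 * s)) \<le> ennreal D * emeasure \<mu> (ball a s)))"

definition bdist :: "'a::euclidean_space set \<Rightarrow> 'a \<Rightarrow> real" where
  "bdist \<Omega> x = infdist x (frontier \<Omega>)"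

definition admissible_radius :: "'a::euclidean_space set \<Rightarrow> ('a \<Rightarrow> real) \<Rightarrow> bool" where
  "admissible_radius \<Omega> r \<longleftrightarrow> (\<forall>x\<in>\<Omega>. 0 < r x \<and> r x \<le> bdist \<Omega> x)"

definition Sop :: "('a::euclidean_space \<Rightarrow> real) \<Rightarrow> ('a \<Rightarrow> real) \<Rightarrow> 'a \<Rightarrow> real" where
  "Sop r u x = (Sup (u ` ball x (r x)) + Inf (u ` ball x (r x))) / 2"

definition Mop :: "'a::euclidean_space measure \<Rightarrow> ('a \<Rightarrow> real) \<Rightarrow> ('a \<Rightarrow> real) \<Rightarrow> 'a \<Rightarrow> real" where
  "Mop \<mu> r u x = (1 / measure \<mu> (ball x (r x))) * (LINT y:ball x (r x)|\<mu>. u y)"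

definition Top :: "real \<Rightarrow> 'a::euclidean_space measure \<Rightarrow> ('a \<Rightarrow> real) \<Rightarrow> ('a \<Rightarrow> real) \<Rightarrow> 'a \<Rightarrow> real" where
  "Top \<alpha> \<mu> r u x = \<alpha> * Sop r u x + (1 - \<alpha>) * Mop \<mu> r u x"

definition concave_modulus :: "(real \<Rightarrow> real) \<Rightarrow> bool" where
  "concave_modulus \<omega> \<longleftrightarrow> mono_on {0..} \<omega> \<and> concave_on {0..} \<omega> \<and> \<omega> 0 = 0 \<and>
      (\<forall>t\<ge>0. \<omega> t \<ge> 0)"

text \<open>Lowest concave modulus of continuity of v on E (pointwise infimum over all concave
  moduli of continuity of v on E; value \<infinity> if there is none).\<close>
definition lowest_modulus :: "('a::euclidean_space \<Rightarrow> real) \<Rightarrow> 'a set \<Rightarrow> real \<Rightarrow> ereal" where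
  "lowest_modulus v E t =
     (INF \<omega> \<in> {\<omega>. concave_modulus \<omega> \<and> (\<forall>x\<in>E. \<forall>y\<in>E. \<bar>v x - v y\<bar> \<le> \<omega> (dist x y))}. ereal (\<omega> t))"

definition sup_norm :: "'a::euclidean_space set \<Rightarrow> ('a \<Rightarrow> real) \<Rightarrow> real" where
  "sup_norm \<Omega> u = Sup ((\<lambda>x. \<bar>u x\<bar>) ` closure \<Omega>)"

definition Omega_n :: "'a::euclidean_space set \<Rightarrow> real \<Rightarrow> nat \<Rightarrow> 'a set" where
  "Omega_n \<Omega> \<epsilon> n = {x\<in>\<Omega>. bdist \<Omega> x > (1 - \<epsilon>) ^ n}"

end

theory Submission
  imports Defs
begin

lemma powr_concave_pos:
  assumes "0 < \<theta>" "\<theta> \<le> 1"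
  shows "concave_on {0<..} (\<lambda>x::real. x powr \<theta>)"
proof (rule f''_le0_imp_concave[where f' = "\<lambda>x. \<theta> * x powr (\<theta> - 1)"
      and f'' = "\<lambda>x. \<theta> * ((\<theta> - 1) * x powr (\<theta> - 1 - 1))"])
  fix x :: real assume x: "x \<in> {0<..}"
  show "((\<lambda>x. x powr \<theta>) has_real_derivative \<theta> * x powr (\<theta> - 1)) (at x)"
    using x by (auto intro!: derivative_eq_intros)
  show "((\<lambda>x. \<theta> * x powr (\<theta> - 1)) has_real_derivative \<theta> * ((\<theta> - 1) * x powr (\<theta> - 1 - 1))) (at x)"
    using x by (auto intro!: derivative_eq_intros)
  show "\<theta> * ((\<theta> - 1) * x powr (\<theta> - 1 - 1)) \<le> 0"
    using assms x by (simp add: mult_nonneg_nonpos mult_nonpos_nonneg)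
qed auto

lemma powr_concave:
  assumes "0 < \<theta>" "\<theta> \<le> 1"
  shows "concave_on {0..} (\<lambda>x::real. x powr \<theta>)"
  unfolding concave_on_iff
proof (intro conjI ballI allI impI)
  fix x y u v :: real
  assume x: "x \<in> {0..}" and y: "y \<in> {0..}" and u: "u \<ge> 0" and v: "v \<ge> 0" and uv: "u + v = 1"
  have key: "b * z powr \<theta> \<le> (b * z) powr \<theta>" if "0 \<le> b" "b \<le> 1" "0 \<le> z" for b z :: real
  proof -
    have "b \<le> b powr \<theta>"
      using powr_mono'[of \<theta> 1 b] that assms by (cases "b = 0") auto
    then have "b * z powr \<theta> \<le> b powr \<theta> * z powr \<theta>"
      by (simp add: mult_right_mono)
    also have "\<dots> = (b * z) powr \<theta>" using that by (simp add: powr_mult)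
    finally show ?thesis .
  qed
  show "u * x powr \<theta> + v * y powr \<theta> \<le> (u *\<^sub>R x + v *\<^sub>R y) powr \<theta>"
  proof (cases "x = 0 \<or> y = 0")
    case True
    then show ?thesis
    proof
      assume "x = 0" then show ?thesis using key[of v y] u v uv y assms by auto
    next
      assume "y = 0" then show ?thesis using key[of u x] u v uv x assms by auto
    qed
  next
    case False
    then have "x \<in> {0<..}" "y \<in> {0<..}" using x y by auto
    then show ?thesis using concave_onD[OF powr_concave_pos[OF assms], of v x y] u v uv
      by (auto simp: eq_diff_eq[symmetric])
  qed
qed (simp add: convex_real_interval)


lemma near_point:
  fixes x y z :: "'a::euclidean_space"
  assumes z: "z \<in> ball x R" and R: "R' > 0" "\<bar>R - R'\<bar> \<le> dist x y"
  shows "\<exists>w\<in>ball y R'. dist z w \<le> R - R' + dist x y"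
proof -
  define h where "h = dist x y"
  have dz: "dist y z < R + h" using z dist_triangle[of y z x] by (simp add: h_def dist_commute)
  have Rh: "R + h > 0" using R h_def by auto
  define c where "c = R' / (R + h)"
  have c0: "0 \<le> c" "c \<le> 1" using R Rh by (auto simp: c_def h_def)
  define w where "w = y + c *\<^sub>R (z - y)"
  have "dist y w = c * dist y z" by (simp add: w_def dist_norm c0 norm_minus_commute)
  also have "\<dots> < R'"
  proof (cases "dist y z = 0")
    case True then show ?thesis using R c0 by simp
  next
    case False
    have cp: "c > 0" using R Rh by (simp add: c_def)
    have "c * dist y z < c * (R + h)" using dz cp by (rule mult_strict_left_mono)
    also have "c * (R + h) = R'" using Rh by (simp add: c_def)
    finally show ?thesis .
  qed
  finally have w: "w \<in> ball y R'" by simp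
  have "dist z w = norm ((1 - c) *\<^sub>R (z - y))"
    by (simp add: w_def dist_norm algebra_simps)
  also have "\<dots> = (1 - c) * dist y z" using c0 by (simp add: dist_norm norm_minus_commute)
  also have "\<dots> \<le> (1 - c) * (R + h)" using dz c0 by (intro mult_left_mono) auto
  also have "\<dots> = R - R' + h" using Rh by (simp add: c_def field_simps)
  finally show ?thesis using w h_def by blast
qed

lemma S_half:
  fixes u :: "'a::euclidean_space \<Rightarrow> real"
  assumes cm: "concave_modulus \<omega>"
  and bnd: "\<forall>p\<in>E. \<forall>q\<in>E. \<bar>u p - u q\<bar> \<le> \<omega> (dist p q)"
  and sub: "ball x R \<subseteq> E" "ball y R' \<subseteq> E"
  and R: "R > 0" "R' > 0" "\<bar>R - R'\<bar> \<le> dist x y"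
  and bdd: "bdd_above (u ` E)" "bdd_below (u ` E)"
  shows "(Sup (u ` ball x R) + Inf (u ` ball x R))/2 - (Sup (u ` ball y R') + Inf (u ` ball y R'))/2 \<le> \<omega> (dist x y)"
proof -
  define h where "h = dist x y"
  define a where "a = R - R' + h"
  define b where "b = R' - R + h"
  have a0: "a \<ge> 0" "b \<ge> 0" using R by (auto simp: a_def b_def h_def)
  have mono: "\<omega> s \<le> \<omega> t" if "0 \<le> s" "s \<le> t" for s t
    using cm that unfolding concave_modulus_def mono_on_def by auto
  have ne: "ball x R \<noteq> {}" "ball y R' \<noteq> {}" using R by auto
  have bax: "bdd_above (u ` ball x R)" "bdd_below (u ` ball x R)"
    "bdd_above (u ` ball y R')" "bdd_below (u ` ball y R')"
    using bdd sub by (meson bdd_above_mono bdd_below_mono image_mono)+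
  have sup: "Sup (u ` ball x R) \<le> Sup (u ` ball y R') + \<omega> a"
  proof (rule cSUP_least[OF ne(1)])
    fix z assume z: "z \<in> ball x R"
    obtain w where w: "w \<in> ball y R'" "dist z w \<le> a"
      using near_point[OF z R(2,3)] a_def h_def by blast
    have "z \<in> E" "w \<in> E" using z w sub by auto
    then have "u z - u w \<le> \<omega> (dist z w)" using bnd by (meson abs_le_D1)
    also have "\<dots> \<le> \<omega> a" using mono w by simp
    finally have "u z \<le> u w + \<omega> a" by simp
    also have "u w \<le> Sup (u ` ball y R')" using w bax by (intro cSUP_upper) auto
    finally show "u z \<le> Sup (u ` ball y R') + \<omega> a" by simp
  qed
  have inf: "Inf (u ` ball x R) - \<omega> b \<le> Inf (u ` ball y R')"
  proof (rule cINF_greatest[OF ne(2)])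
    fix z assume z: "z \<in> ball y R'"
    obtain w where w: "w \<in> ball x R" "dist z w \<le> b"
      using near_point[OF z R(1), of x] R(3) b_def h_def by (auto simp: dist_commute abs_minus_commute)
    have "z \<in> E" "w \<in> E" using z w sub by auto
    then have "u w - u z \<le> \<omega> (dist w z)" using bnd by (meson abs_le_D1)
    then have "u w - u z \<le> \<omega> (dist z w)" by (simp add: dist_commute)
    also have "\<dots> \<le> \<omega> b" using mono w by simp
    finally have "u w \<le> u z + \<omega> b" by simp
    have "Inf (u ` ball x R) \<le> u w" using w bax by (intro cINF_lower) auto
    then show "Inf (u ` ball x R) - \<omega> b \<le> u z" using \<open>u w \<le> u z + \<omega> b\<close> by simp
  qed
  have conc: "(1/2) * \<omega> a + (1/2) * \<omega> b \<le> \<omega> ((1/2) *\<^sub>R a + (1/2) *\<^sub>R b)"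
  proof -
    have "concave_on {0..} \<omega>" using cm unfolding concave_modulus_def by auto
    from concave_onD[OF this, of "1/2" a b] a0 show ?thesis by simp
  qed
  have "(1/2) *\<^sub>R a + (1/2) *\<^sub>R b = h" by (simp add: a_def b_def field_simps)
  then have "\<omega> ((1/2) *\<^sub>R a + (1/2) *\<^sub>R b) = \<omega> (dist x y)" using h_def by simp
  then show ?thesis using sup inf conc by (simp add: field_simps)
qed

lemma S_abs:
  fixes u :: "'a::euclidean_space \<Rightarrow> real"
  assumes cm: "concave_modulus \<omega>"
  and bnd: "\<forall>p\<in>E. \<forall>q\<in>E. \<bar>u p - u q\<bar> \<le> \<omega> (dist p q)"
  and sub: "ball x (r x) \<subseteq> E" "ball y (r y) \<subseteq> E"
  and R: "r x > 0" "r y > 0" "\<bar>r x - r y\<bar> \<le> dist x y"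
  and bdd: "bdd_above (u ` E)" "bdd_below (u ` E)"
  shows "\<bar>Sop r u x - Sop r u y\<bar> \<le> \<omega> (dist x y)"
  using S_half[OF cm bnd sub R bdd] S_half[OF cm bnd sub(2,1) R(2,1) _ bdd]
    R(3) unfolding Sop_def by (auto simp: dist_commute abs_minus_commute)


lemma dm_sets: "doubling_measure \<mu> \<Longrightarrow> sets \<mu> = sets borel"
  by (simp add: doubling_measure_def)

lemma dm_space: "doubling_measure \<mu> \<Longrightarrow> space \<mu> = UNIV"
  using sets_eq_imp_space_eq[OF dm_sets] by simp

lemma dm_ball_pos: "doubling_measure \<mu> \<Longrightarrow> s > 0 \<Longrightarrow> 0 < emeasure \<mu> (ball a s)"
  by (simp add: doubling_measure_def)

lemma dm_ball_fin: "emeasure \<mu> (ball a s) < \<infinity>" if "doubling_measure \<mu>"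
proof (cases "s > 0")
  case True then show ?thesis using that by (simp add: doubling_measure_def)
next
  case False then show ?thesis by (simp add: ball_empty not_less)
qed

lemma dm_ball_sets [measurable]: "doubling_measure \<mu> \<Longrightarrow> ball a s \<in> sets \<mu>"
  by (simp add: dm_sets)

lemma dm_sigma_finite:
  assumes dm: "doubling_measure \<mu>"
  shows "sigma_finite_measure \<mu>"
proof
  let ?A = "range (\<lambda>n::nat. ball (0::'a) (real n))"
  show "\<exists>A::'a set set. countable A \<and> A \<subseteq> sets \<mu> \<and> \<Union> A = space \<mu> \<and> (\<forall>a\<in>A. emeasure \<mu> a \<noteq> \<infinity>)"
  proof (intro exI[of _ ?A] conjI)
    show "countable ?A" by simp
    show "?A \<subseteq> sets \<mu>" using dm_ball_sets[OF dm] by auto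
    show "\<Union> ?A = space \<mu>"
    proof -
      have "x \<in> \<Union> ?A" for x :: 'a
      proof -
        obtain n :: nat where "norm x < real n" using reals_Archimedean2 by blast
        then show ?thesis by auto
      qed
      then show ?thesis using dm_space[OF dm] by auto
    qed
    show "\<forall>a\<in>?A. emeasure \<mu> a \<noteq> \<infinity>" using dm_ball_fin[OF dm] by (auto simp: less_top)
  qed
qed

lemma dm_ball_measurable:
  assumes dm: "doubling_measure (\<mu>::'a::euclidean_space measure)"
  shows "(\<lambda>z. emeasure \<mu> (ball z r)) \<in> borel_measurable borel"
proof -
  interpret sigma_finite_measure \<mu> by (rule dm_sigma_finite[OF dm])
  let ?Q = "{p::'a\<times>'a. dist (fst p) (snd p) < r}"
  have "open ?Q" by (intro open_Collect_less continuous_intros)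
  then have "?Q \<in> sets (borel :: ('a \<times> 'a) measure)" by simp
  moreover have "sets (borel \<Otimes>\<^sub>M \<mu>) = sets (borel :: ('a \<times> 'a) measure)"
    using dm_sets[OF dm] borel_prod by (metis sets_pair_measure_cong)
  ultimately have "?Q \<in> sets (borel \<Otimes>\<^sub>M \<mu>)" by simp
  from measurable_emeasure_Pair[OF this] show ?thesis
    by (simp add: ball_def vimage_def)
qed


lemma shell_point:
  fixes a z :: "'a::euclidean_space"
  assumes s: "s > 0" "3 * s \<le> R" and z: "dist a z < R" "\<not> dist a z < R - s"
  shows "\<exists>p. ball p (s/2) \<subseteq> (ball a (R-s) - ball a (R-3 * s)) \<inter> ball z (2 * s) \<and> ball z (2 * s) \<subseteq> ball p (4 * s)"
proof -
  define nv where "nv = dist a z"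
  have nv: "nv \<ge> R - s" "nv < R" "nv \<ge> 2 * s" using z s by (auto simp: nv_def)
  define c where "c = (nv - 3/2 * s) / nv"
  have c: "0 \<le> c" "c \<le> 1" using nv s by (auto simp: c_def field_simps)
  define p where "p = a + c *\<^sub>R (z - a)"
  have dap: "dist a p = nv - 3/2 * s"
  proof -
    have "dist a p = c * nv" using c by (simp add: p_def dist_norm nv_def norm_minus_commute)
    also have "\<dots> = nv - 3/2 * s" using nv s by (simp add: c_def)
    finally show ?thesis .
  qed
  have dzp: "dist z p = 3/2 * s"
  proof -
    have "z - p = (1 - c) *\<^sub>R (z - a)" by (simp add: p_def algebra_simps)
    then have "dist z p = (1 - c) * nv" using c by (simp add: dist_norm nv_def norm_minus_commute)
    also have "\<dots> = 3/2 * s" using nv s by (simp add: c_def field_simps)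
    finally show ?thesis .
  qed
  have "ball p (s/2) \<subseteq> (ball a (R-s) - ball a (R-3 * s)) \<inter> ball z (2 * s)"
  proof
    fix q assume q: "q \<in> ball p (s/2)"
    then have dpq: "dist p q < s/2" by simp
    have "dist a q \<le> dist a p + dist p q" by (rule dist_triangle)
    then have 1: "dist a q < R - s" using dap dpq nv by linarith
    have "dist a p \<le> dist a q + dist q p" by (rule dist_triangle)
    then have 2: "\<not> dist a q < R - 3 * s" using dap dpq nv by (simp add: dist_commute)
    have "dist z q \<le> dist z p + dist p q" by (rule dist_triangle)
    then have 3: "dist z q < 2 * s" using dzp dpq by linarith
    show "q \<in> (ball a (R-s) - ball a (R-3 * s)) \<inter> ball z (2 * s)" using 1 2 3 by simp
  qed
  moreover have "ball z (2 * s) \<subseteq> ball p (4 * s)"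
  proof
    fix q assume "q \<in> ball z (2 * s)"
    then have "dist z q < 2 * s" by simp
    moreover have "dist p q \<le> dist p z + dist z q" by (rule dist_triangle)
    ultimately show "q \<in> ball p (4 * s)" using dzp s by (simp add: dist_commute)
  qed
  ultimately show ?thesis by blast
qed

lemma dm_fmeas: "doubling_measure \<mu> \<Longrightarrow> ball c r \<in> fmeasurable \<mu>"
  using dm_ball_fin[of \<mu> c r] by (simp add: fmeasurable_def dm_sets)

lemma dm_mono: "doubling_measure \<mu> \<Longrightarrow> A \<subseteq> ball c r \<Longrightarrow> A \<in> sets borel \<Longrightarrow> measure \<mu> A \<le> measure \<mu> (ball c r)"
  by (rule measure_mono_fmeasurable) (auto simp: dm_fmeas dm_sets)

lemma dm_emeasure: "doubling_measure \<mu> \<Longrightarrow> A \<subseteq> ball c r \<Longrightarrow> A \<in> sets borel \<Longrightarrow> emeasure \<mu> A = ennreal (measure \<mu> A)"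
  apply (rule emeasure_eq_ennreal_measure)
  using emeasure_mono[of A "ball c r" \<mu>] dm_ball_fin[of \<mu> c r] by (auto simp: dm_sets top_unique)

lemma dm_measure_pos: "doubling_measure \<mu> \<Longrightarrow> r > 0 \<Longrightarrow> measure \<mu> (ball c r) > 0"
  using dm_ball_pos[of \<mu> r c] dm_emeasure[of \<mu> "ball c r" c r] by simp

lemma dm_real_doubling:
  assumes dm: "doubling_measure \<mu>"
  obtains D where "D \<ge> 1" "\<And>a s. s > 0 \<Longrightarrow> measure \<mu> (ball a (2 * s)) \<le> D * measure \<mu> (ball a s)"
proof -
  obtain D where D: "D \<ge> 1" "\<And>a s. s > 0 \<Longrightarrow> emeasure \<mu> (ball a (2 * s)) \<le> ennreal D * emeasure \<mu> (ball a s)"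
    using dm unfolding doubling_measure_def by blast
  have "measure \<mu> (ball a (2 * s)) \<le> D * measure \<mu> (ball a s)" if "s > 0" for a s
  proof -
    have "ennreal (measure \<mu> (ball a (2 * s))) \<le> ennreal D * ennreal (measure \<mu> (ball a s))"
      using D(2)[of s a, OF that] dm_emeasure[OF dm, of "ball a (2 * s)" a "2 * s"] dm_emeasure[OF dm, of "ball a s" a s]
      by simp
    also have "\<dots> = ennreal (D * measure \<mu> (ball a s))" using D by (simp add: ennreal_mult)
    finally show ?thesis using D by (subst (asm) ennreal_le_iff) auto
  qed
  then show ?thesis using D that by blast
qed


lemma shell_compare:
  fixes \<mu> :: "'a::euclidean_space measure"
  assumes dm: "doubling_measure \<mu>" and D: "D \<ge> 1"
    and dbl: "\<And>a s. s > 0 \<Longrightarrow> measure \<mu> (ball a (2 * s)) \<le> D * measure \<mu> (ball a s)"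
    and s: "s > 0" "3 * s \<le> R"
  shows "measure \<mu> (ball a R - ball a (R - s)) \<le> D^4 * measure \<mu> (ball a (R - s) - ball a (R - 3 * s))"
proof -
  interpret sigma_finite_measure \<mu> by (rule dm_sigma_finite[OF dm])
  interpret P: pair_sigma_finite \<mu> \<mu> by (simp add: pair_sigma_finite_def dm_sigma_finite[OF dm])
  define E where "E = ball a R - ball a (R - s)"
  define F where "F = ball a (R - s) - ball a (R - 3 * s)"
  have E_sets [measurable]: "E \<in> sets \<mu>" and F_sets [measurable]: "F \<in> sets \<mu>"
    using dm_sets[OF dm] by (auto simp: E_def F_def)
  define g where "g z = measure \<mu> (ball z (2 * s))" for z
  have gpos: "g z > 0" for z using dm_measure_pos[OF dm] s by (simp add: g_def)
  have dbl3: "measure \<mu> (ball p (4 * s)) \<le> D^3 * measure \<mu> (ball p (s/2))" for p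
  proof -
    have "measure \<mu> (ball p (4 * s)) = measure \<mu> (ball p (2 * (2 * s)))" by simp
    also have "\<dots> \<le> D * measure \<mu> (ball p (2 * s))" using dbl[of "2 * s" p] s by simp
    also have "\<dots> \<le> D * (D * measure \<mu> (ball p s))" using dbl[of s p] s D by (intro mult_left_mono) auto
    also have "measure \<mu> (ball p s) = measure \<mu> (ball p (2 * (s/2)))" by simp
    also have "\<dots> \<le> D * measure \<mu> (ball p (s/2))" using dbl[of "s/2" p] s by simp
    finally show ?thesis using D
      by (smt (verit, best) mult_left_mono mult.assoc power3_eq_cube)
  qed
  have g_meas [measurable]: "g \<in> borel_measurable \<mu>"
  proof -
    have "(\<lambda>z. emeasure \<mu> (ball z (2 * s))) \<in> borel_measurable \<mu>"
      using dm_ball_measurable[OF dm] measurable_cong_sets[OF dm_sets[OF dm] refl] by blast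
    then show ?thesis unfolding g_def measure_def by measurable
  qed
  define G where "G = (E \<times> F) \<inter> {p. dist (fst p) (snd p) < 2 * s}"
  have G_sets [measurable]: "G \<in> sets (\<mu> \<Otimes>\<^sub>M \<mu>)"
  proof -
    have "open {p::'a\<times>'a. dist (fst p) (snd p) < 2 * s}" by (intro open_Collect_less continuous_intros)
    then have "{p::'a\<times>'a. dist (fst p) (snd p) < 2 * s} \<in> sets (borel :: ('a \<times> 'a) measure)" by simp
    moreover have "sets (\<mu> \<Otimes>\<^sub>M \<mu>) = sets (borel :: ('a \<times> 'a) measure)"
      using dm_sets[OF dm] borel_prod by (metis sets_pair_measure_cong)
    ultimately have "{p::'a\<times>'a. dist (fst p) (snd p) < 2 * s} \<in> sets (\<mu> \<Otimes>\<^sub>M \<mu>)" by simp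
    moreover have "E \<times> F \<in> sets (\<mu> \<Otimes>\<^sub>M \<mu>)" by (intro pair_measureI E_sets F_sets)
    ultimately show ?thesis unfolding G_def by blast
  qed
  define k where "k p = ennreal (1 / g (fst p)) * indicator G p" for p
  have k_meas: "k \<in> borel_measurable (\<mu> \<Otimes>\<^sub>M \<mu>)" unfolding k_def by measurable
  have step1: "ennreal (1 / D^3) * indicator E z \<le> (\<integral>\<^sup>+ w. k (z, w) \<partial>\<mu>)" for z
  proof (cases "z \<in> E")
    case False then show ?thesis by simp
  next
    case True
    then have zE: "dist a z < R" "\<not> dist a z < R - s" by (auto simp: E_def)
    obtain p where p: "ball p (s/2) \<subseteq> F \<inter> ball z (2 * s)" "ball z (2 * s) \<subseteq> ball p (4 * s)"
      using shell_point[OF s zE] unfolding F_def by blast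
    have "(\<integral>\<^sup>+ w. k (z, w) \<partial>\<mu>) = (\<integral>\<^sup>+ w. ennreal (1 / g z) * indicator (F \<inter> ball z (2 * s)) w \<partial>\<mu>)"
      using True by (intro nn_integral_cong) (auto simp: k_def G_def indicator_def)
    also have "\<dots> = ennreal (1 / g z) * emeasure \<mu> (F \<inter> ball z (2 * s))"
      using dm_sets[OF dm] by (intro nn_integral_cmult_indicator) (auto simp: F_def)
    also have fe: "emeasure \<mu> (F \<inter> ball z (2 * s)) = ennreal (measure \<mu> (F \<inter> ball z (2 * s)))"
      by (rule dm_emeasure[OF dm, of _ z "2 * s"]) (auto simp: F_def)
    finally have eq: "(\<integral>\<^sup>+ w. k (z, w) \<partial>\<mu>) = ennreal (measure \<mu> (F \<inter> ball z (2 * s)) / g z)"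
      using gpos[of z] by (simp add: ennreal_mult'' [symmetric] divide_inverse mult.commute)
    have "g z \<le> measure \<mu> (ball p (4 * s))"
      unfolding g_def using p(2) by (intro dm_mono[OF dm]) auto
    also have "\<dots> \<le> D^3 * measure \<mu> (ball p (s/2))" by (rule dbl3)
    also have "measure \<mu> (ball p (s/2)) \<le> measure \<mu> (F \<inter> ball z (2 * s))"
      using p(1) dm_sets[OF dm] fe
      by (intro measure_mono_fmeasurable) (auto simp: F_def fmeasurable_def)
    finally have "g z \<le> D^3 * measure \<mu> (F \<inter> ball z (2 * s))" using D by (simp add: mult_left_mono)
    then have "1 / D^3 \<le> measure \<mu> (F \<inter> ball z (2 * s)) / g z"
      using gpos[of z] D by (simp add: field_simps)
    then show ?thesis using True eq by (simp add: ennreal_leI)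
  qed
  have step2: "(\<integral>\<^sup>+ z. k (z, w) \<partial>\<mu>) \<le> ennreal D * indicator F w" for w
  proof (cases "w \<in> F")
    case False
    then have "\<And>z. k (z, w) = 0" by (simp add: k_def G_def)
    then show ?thesis by simp
  next
    case True
    define mw where "mw = measure \<mu> (ball w (2 * s))"
    have mw: "mw > 0" using dm_measure_pos[OF dm] s by (simp add: mw_def)
    have "k (z, w) \<le> ennreal (D / mw) * indicator (ball w (2 * s)) z" for z
    proof (cases "(z, w) \<in> G")
      case False then show ?thesis by (simp add: k_def)
    next
      case True
      then have dzw: "dist z w < 2 * s" by (simp add: G_def)
      have "mw \<le> measure \<mu> (ball z (4 * s))"
        unfolding mw_def using dzw
      proof (intro dm_mono[OF dm])
        show "ball w (2 * s) \<subseteq> ball z (4 * s)"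
        proof
          fix t assume "t \<in> ball w (2 * s)"
          then have "dist w t < 2 * s" by simp
          moreover have "dist z t \<le> dist z w + dist w t" by (rule dist_triangle)
          ultimately show "t \<in> ball z (4 * s)" using dzw by (simp add: dist_commute)
        qed
      qed auto
      also have "\<dots> = measure \<mu> (ball z (2 * (2 * s)))" by simp
      also have "\<dots> \<le> D * g z" unfolding g_def using dbl[of "2 * s" z] s by simp
      finally have "mw \<le> D * g z" .
      then have "1 / g z \<le> D / mw" using mw gpos[of z] by (simp add: field_simps)
      then show ?thesis using True dzw by (simp add: k_def ennreal_leI dist_commute)
    qed
    then have "(\<integral>\<^sup>+ z. k (z, w) \<partial>\<mu>) \<le> (\<integral>\<^sup>+ z. ennreal (D / mw) * indicator (ball w (2 * s)) z \<partial>\<mu>)"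
      by (intro nn_integral_mono) auto
    also have "\<dots> = ennreal (D / mw) * emeasure \<mu> (ball w (2 * s))"
      using dm_sets[OF dm] by (intro nn_integral_cmult_indicator) auto
    also have "emeasure \<mu> (ball w (2 * s)) = ennreal mw"
      unfolding mw_def by (rule dm_emeasure[OF dm]) auto
    also have "ennreal (D / mw) * ennreal mw = ennreal D"
      using mw D by (simp add: ennreal_mult'' [symmetric])
    finally show ?thesis using True by simp
  qed
  have "ennreal (1 / D^3) * emeasure \<mu> E = (\<integral>\<^sup>+ z. ennreal (1 / D^3) * indicator E z \<partial>\<mu>)"
    by (simp add: nn_integral_cmult_indicator)
  also have "\<dots> \<le> (\<integral>\<^sup>+ z. (\<integral>\<^sup>+ w. k (z, w) \<partial>\<mu>) \<partial>\<mu>)"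
    by (intro nn_integral_mono step1)
  also have "\<dots> = (\<integral>\<^sup>+ w. (\<integral>\<^sup>+ z. k (z, w) \<partial>\<mu>) \<partial>\<mu>)"
    using P.Fubini[OF k_meas] by simp
  also have "\<dots> \<le> (\<integral>\<^sup>+ w. ennreal D * indicator F w \<partial>\<mu>)"
    by (intro nn_integral_mono step2)
  also have "\<dots> = ennreal D * emeasure \<mu> F" by (simp add: nn_integral_cmult_indicator)
  finally have ineq: "ennreal (1 / D^3) * emeasure \<mu> E \<le> ennreal D * emeasure \<mu> F" .
  have "emeasure \<mu> E = ennreal (measure \<mu> E)"
    by (rule dm_emeasure[OF dm, of _ a R]) (auto simp: E_def)
  moreover have "emeasure \<mu> F = ennreal (measure \<mu> F)"
    by (rule dm_emeasure[OF dm, of _ a R]) (auto simp: F_def)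
  ultimately have i2: "ennreal (1 / D^3) * ennreal (measure \<mu> E) \<le> ennreal D * ennreal (measure \<mu> F)"
    using ineq by simp
  have e1: "ennreal (1 / D^3) * ennreal (measure \<mu> E) = ennreal ((1 / D^3) * measure \<mu> E)"
    by (rule ennreal_mult[symmetric]) (use D in auto)
  have e2: "ennreal D * ennreal (measure \<mu> F) = ennreal (D * measure \<mu> F)"
    by (rule ennreal_mult[symmetric]) (use D in auto)
  have "(1 / D^3) * measure \<mu> E \<le> D * measure \<mu> F"
    using i2 unfolding e1 e2 using D by (subst (asm) ennreal_le_iff) auto
  then have "D^3 * ((1 / D^3) * measure \<mu> E) \<le> D^3 * (D * measure \<mu> F)"
    using D by (intro mult_left_mono) auto
  then have "measure \<mu> E \<le> D^4 * measure \<mu> F"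
  proof -
    have eq: "D^3 * (D * measure \<mu> F) = D^4 * measure \<mu> F" by (simp add: eval_nat_numeral)
    have "measure \<mu> E \<le> D^3 * (D * measure \<mu> F)"
      using \<open>D^3 * ((1 / D^3) * measure \<mu> E) \<le> D^3 * (D * measure \<mu> F)\<close> D by simp
    then show ?thesis unfolding eq .
  qed
  then show ?thesis by (simp add: E_def F_def)
qed


lemma annular_decay:
  fixes \<mu> :: "'a::euclidean_space measure"
  assumes dm: "doubling_measure \<mu>"
  obtains \<theta> where "0 < \<theta>" "\<theta> \<le> 1"
    "\<And>a R s. R > 0 \<Longrightarrow> 0 \<le> s \<Longrightarrow>
       measure \<mu> (ball a R - ball a (R - s)) \<le> 3 * (s / R) powr \<theta> * measure \<mu> (ball a R)"
proof -
  obtain D where D: "D \<ge> 1" and dbl: "\<And>a s. s > 0 \<Longrightarrow> measure \<mu> (ball a (2 * s)) \<le> D * measure \<mu> (ball a s)"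
    using dm_real_doubling[OF dm] by blast
  define \<eta> where "\<eta> = D^4 / (1 + D^4)"
  have D4: "D^4 \<ge> 1" using D by simp
  have aux: "0 < X / (1 + X) \<and> X / (1 + X) < 1 \<and> 1 / (X / (1 + X)) \<le> 2" if "X \<ge> 1" for X :: real
    using that by (auto simp: field_simps)
  have \<eta>: "0 < \<eta>" "\<eta> < 1" "1 / \<eta> \<le> 2" using aux[OF D4] by (auto simp: \<eta>_def)
  define \<theta> where "\<theta> = log 3 (1 / \<eta>)"
  have th: "0 < \<theta>" "\<theta> \<le> 1" using \<eta> by (auto simp: \<theta>_def)
  have th3: "3 powr \<theta> = 1 / \<eta>" using \<eta> by (simp add: \<theta>_def)
  have main: "measure \<mu> (ball a R - ball a (R - s)) \<le> 3 * (s / R) powr \<theta> * measure \<mu> (ball a R)"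
    if R: "R > 0" and s: "0 \<le> s" for a R s
  proof -
    define g where "g t = measure \<mu> (ball a R - ball a (R - t))" for t
    define m where "m = measure \<mu> (ball a R)"
    have m0: "m \<ge> 0" by (simp add: m_def)
    have gm: "g t \<le> m" for t unfolding g_def m_def by (rule dm_mono[OF dm]) auto
    have gmono: "g t \<le> g t'" if "t \<le> t'" for t t'
      unfolding g_def using that
      by (intro measure_mono_fmeasurable) (auto simp: dm_sets[OF dm] dm_fmeas[OF dm] intro: fmeasurable_Diff)
    have rec: "g t \<le> \<eta> * g (3 * t)" if t: "t > 0" "3 * t \<le> R" for t
    proof -
      have sc: "g t \<le> D^4 * measure \<mu> (ball a (R - t) - ball a (R - 3 * t))"
        unfolding g_def by (rule shell_compare[OF dm D dbl t])
      have eqset: "ball a (R - t) - ball a (R - 3 * t) = (ball a R - ball a (R - 3 * t)) - (ball a R - ball a (R - t))"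
        using t by auto
      have "measure \<mu> (ball a (R - t) - ball a (R - 3 * t)) = g (3 * t) - g t"
        unfolding eqset g_def
        by (rule measure_Diff) (use dm_emeasure[OF dm, of "ball a R - ball a (R - 3 * t)" a R] dm_sets[OF dm] in auto)
      with sc have "g t \<le> D^4 * (g (3 * t) - g t)" by simp
      then have "g t * (1 + D^4) \<le> D^4 * g (3 * t)" by (simp add: algebra_simps)
      then show ?thesis using D4 by (simp add: \<eta>_def field_simps)
    qed
    have big: "g t \<le> 3 * (t / R) powr \<theta> * m" if "R / 3 < t" for t
    proof -
      have "1 / 3 \<le> (1/3) powr \<theta>" using powr_mono'[of \<theta> 1 "1/3"] th by simp
      also have "(1/3) powr \<theta> \<le> (t / R) powr \<theta>" using that R th by (intro powr_mono2) (auto simp: field_simps)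
      finally have "1 \<le> 3 * (t / R) powr \<theta>" by simp
      then have "m \<le> 3 * (t / R) powr \<theta> * m" using m0 by (metis mult_le_cancel_right1 mult.commute order_refl mult_right_mono mult_1)
      then show ?thesis using gm[of t] by linarith
    qed
    have ind: "\<forall>t. R / 3^k < t \<and> t \<le> R \<longrightarrow> g t \<le> 3 * (t / R) powr \<theta> * m" for k :: nat
    proof (induction k)
      case 0 then show ?case by simp
    next
      case (Suc k)
      show ?case
      proof (intro allI impI)
        fix t assume t: "R / 3 ^ Suc k < t \<and> t \<le> R"
        show "g t \<le> 3 * (t / R) powr \<theta> * m"
        proof (cases "R / 3 < t")
          case True then show ?thesis by (rule big)
        next
          case False
          have tpos: "t > 0" using t R by (smt (verit) divide_pos_pos zero_less_power)
          have t3: "3 * t \<le> R" using False by simp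
          have "R / 3 ^ k < 3 * t" using t by (simp add: field_simps)
          then have ih: "g (3 * t) \<le> 3 * (3 * t / R) powr \<theta> * m" using Suc.IH t3 by blast
          have "g t \<le> \<eta> * g (3 * t)" by (rule rec[OF tpos t3])
          also have "\<dots> \<le> \<eta> * (3 * (3 * t / R) powr \<theta> * m)" using ih \<eta> by (intro mult_left_mono) auto
          also have "(3 * t / R) powr \<theta> = 3 powr \<theta> * (t / R) powr \<theta>"
            by (simp add: powr_mult[symmetric] times_divide_eq_right)
          also have "\<eta> * (3 * (3 powr \<theta> * (t / R) powr \<theta>) * m) = 3 * (t / R) powr \<theta> * m"
            using th3 \<eta> by (simp add: field_simps)
          finally show ?thesis .
        qed
      qed
    qed
    show ?thesis
    proof (cases "s = 0")
      case True then show ?thesis by simp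
    next
      case False
      then have sp: "s > 0" using s by simp
      show ?thesis
      proof (cases "s \<le> R")
        case False then show ?thesis using big[of s] R by (simp add: g_def m_def)
      next
        case True
        obtain k where "R / s < 3 ^ k" using real_arch_pow[of 3 "R / s"] by auto
        then have "R / 3 ^ k < s" using sp by (simp add: field_simps)
        then show ?thesis using ind[of k] True by (simp add: g_def m_def)
      qed
    qed
  qed
  show ?thesis using that th main by blast
qed


lemma ind_int:
  fixes \<mu> :: "'a::euclidean_space measure"
  assumes dm: "doubling_measure \<mu>" and A: "A \<in> sets borel" "A \<subseteq> ball c r"
  shows "integrable \<mu> (indicator A :: 'a \<Rightarrow> real)"
  using dm_emeasure[OF dm A(2) A(1)] A dm_space[OF dm] dm_sets[OF dm]
  by (simp add: integrable_indicator_iff)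

lemma cont_int:
  fixes \<mu> :: "'a::euclidean_space measure" and g :: "'a \<Rightarrow> real"
  assumes dm: "doubling_measure \<mu>" and A: "open A" "A \<subseteq> ball c r"
    and cont: "continuous_on A g" and bnd: "\<forall>z\<in>A. \<bar>g z\<bar> \<le> N"
  shows "integrable \<mu> (\<lambda>z. indicator A z *\<^sub>R g z)"
proof (rule Bochner_Integration.integrable_bound[where f="\<lambda>z. N * indicator A z"])
  show "integrable \<mu> (\<lambda>z. N * indicator A z :: real)"
    using ind_int[OF dm _ A(2)] A(1) by simp
  have "(\<lambda>z. indicator A z *\<^sub>R g z) \<in> borel_measurable borel"
    using A(1) cont by (intro borel_measurable_continuous_on_indicator) auto
  then show "(\<lambda>z. indicator A z *\<^sub>R g z) \<in> borel_measurable \<mu>"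
    using measurable_cong_sets[OF dm_sets[OF dm] refl] by blast
  show "AE z in \<mu>. norm (indicator A z *\<^sub>R g z) \<le> norm (N * indicator A z)"
    using bnd by (intro AE_I2) (auto simp: indicator_def)
qed

lemma set_int_bound:
  fixes \<mu> :: "'a::euclidean_space measure" and g :: "'a \<Rightarrow> real"
  assumes dm: "doubling_measure \<mu>" and A: "open A" "A \<subseteq> ball c r"
    and cont: "continuous_on A g" and bnd: "\<forall>z\<in>A. \<bar>g z\<bar> \<le> N"
  shows "\<bar>set_lebesgue_integral \<mu> A g\<bar> \<le> N * measure \<mu> A"
proof -
  have "\<bar>set_lebesgue_integral \<mu> A g\<bar> \<le> (\<integral>z. N * indicator A z \<partial>\<mu>)"
    unfolding set_lebesgue_integral_def
  proof (rule integral_abs_bound_integral[OF cont_int[OF dm A cont bnd]])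
    show "integrable \<mu> (\<lambda>z. N * indicator A z :: real)"
      using ind_int[OF dm _ A(2)] A(1) by simp
  qed (use bnd in \<open>auto simp: indicator_def\<close>)
  also have "\<dots> = N * measure \<mu> A" using dm_space[OF dm] by simp
  finally show ?thesis .
qed

lemma set_int_diff:
  fixes \<mu> :: "'a::euclidean_space measure" and g :: "'a \<Rightarrow> real"
  assumes dm: "doubling_measure \<mu>" and A: "open A" "A \<subseteq> ball c r" and B: "open B" "B \<subseteq> ball c' r'"
    and cont: "continuous_on (A \<union> B) g" and bnd: "\<forall>z\<in>A \<union> B. \<bar>g z\<bar> \<le> N"
  shows "\<bar>set_lebesgue_integral \<mu> A g - set_lebesgue_integral \<mu> B g\<bar> \<le> N * (measure \<mu> (A - B) + measure \<mu> (B - A))"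
proof -
  have iA: "integrable \<mu> (\<lambda>z. indicator A z *\<^sub>R g z)"
    using cont_int[OF dm A _] cont bnd by (meson Un_iff continuous_on_subset sup_ge1)
  have iB: "integrable \<mu> (\<lambda>z. indicator B z *\<^sub>R g z)"
    using cont_int[OF dm B _] cont bnd by (meson Un_iff continuous_on_subset sup_ge2)
  have i1: "integrable \<mu> (indicator (A - B) :: 'a \<Rightarrow> real)"
    using ind_int[OF dm _ _] A by (metis Diff_subset borel_open sets.Diff subset_trans B(1))
  have i2: "integrable \<mu> (indicator (B - A) :: 'a \<Rightarrow> real)"
    using ind_int[OF dm _ _] B by (metis Diff_subset borel_open sets.Diff subset_trans A(1))
  have "set_lebesgue_integral \<mu> A g - set_lebesgue_integral \<mu> B g
      = (\<integral>z. indicator A z *\<^sub>R g z - indicator B z *\<^sub>R g z \<partial>\<mu>)"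
    unfolding set_lebesgue_integral_def using iA iB by simp
  also have "\<bar>\<dots>\<bar> \<le> (\<integral>z. N * indicator (A - B) z + N * indicator (B - A) z \<partial>\<mu>)"
  proof (rule integral_abs_bound_integral)
    show "integrable \<mu> (\<lambda>z. indicator A z *\<^sub>R g z - indicator B z *\<^sub>R g z)" using iA iB by simp
    show "integrable \<mu> (\<lambda>z. N * indicator (A - B) z + N * indicator (B - A) z :: real)" using i1 i2 by simp
  qed (use bnd in \<open>auto simp: indicator_def\<close>)
  also have "\<dots> = N * (measure \<mu> (A - B) + measure \<mu> (B - A))"
    using i1 i2 dm_space[OF dm] by (simp add: algebra_simps)
  finally show ?thesis .
qed


lemma dm_mono2:
  assumes dm: "doubling_measure \<mu>" and "A \<subseteq> B" "B \<subseteq> ball c r" "A \<in> sets borel" "B \<in> sets borel"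
  shows "measure \<mu> A \<le> measure \<mu> B"
proof (rule measure_mono_fmeasurable)
  show "B \<in> fmeasurable \<mu>" using dm_emeasure[OF dm assms(3,5)] assms(5) dm_sets[OF dm]
    by (simp add: fmeasurable_def)
qed (use assms dm_sets[OF dm] in auto)

lemma M_bound:
  fixes \<mu> :: "'a::euclidean_space measure" and u r :: "'a \<Rightarrow> real"
  assumes dm: "doubling_measure \<mu>" and D: "D \<ge> 1"
    and dbl: "\<And>a s. s > 0 \<Longrightarrow> measure \<mu> (ball a (2 * s)) \<le> D * measure \<mu> (ball a s)"
    and th: "0 < \<theta>" "\<theta> \<le> 1"
    and dec: "\<And>a R s. R > 0 \<Longrightarrow> 0 \<le> s \<Longrightarrow>
       measure \<mu> (ball a R - ball a (R - s)) \<le> 3 * (s / R) powr \<theta> * measure \<mu> (ball a R)"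
    and rho: "0 < \<rho>" "\<rho> \<le> r x" "\<rho> \<le> r y" and rl: "\<bar>r x - r y\<bar> \<le> dist x y"
    and cont: "continuous_on (ball x (r x) \<union> ball y (r y)) u"
    and bnd: "\<forall>z\<in>ball x (r x) \<union> ball y (r y). \<bar>u z\<bar> \<le> N"
  shows "\<bar>Mop \<mu> r u x - Mop \<mu> r u y\<bar> \<le> 12 * (1 + D^2) * N * (dist x y / \<rho>) powr \<theta>"
proof -
  define R where "R = r x"
  define R' where "R' = r y"
  define h where "h = dist x y"
  define Bx where "Bx = ball x R"
  define By where "By = ball y R'"
  define mx where "mx = measure \<mu> Bx"
  define my where "my = measure \<mu> By"
  define Ix where "Ix = set_lebesgue_integral \<mu> Bx u"
  define Iy where "Iy = set_lebesgue_integral \<mu> By u"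
  have Rp: "R > 0" "R' > 0" using rho by (auto simp: R_def R'_def)
  have mxp: "mx > 0" "my > 0" using dm_measure_pos[OF dm] Rp by (auto simp: mx_def my_def Bx_def By_def)
  have "x \<in> ball x (r x) \<union> ball y (r y)" using Rp by (simp add: R_def)
  then have "\<bar>u x\<bar> \<le> N" using bnd by blast
  then have N0: "N \<ge> 0" by linarith
  have Mx: "Mop \<mu> r u x = Ix / mx" and My: "Mop \<mu> r u y = Iy / my"
    by (simp_all add: Mop_def Ix_def Iy_def mx_def my_def Bx_def By_def R_def R'_def)
  have contx: "continuous_on Bx u" and conty: "continuous_on By u"
    using cont by (auto simp: Bx_def By_def R_def R'_def intro: continuous_on_subset)
  have bIx: "\<bar>Ix\<bar> \<le> N * mx"
    unfolding Ix_def mx_def using set_int_bound[OF dm _ _ contx, of x R N] bnd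
    by (auto simp: Bx_def R_def)
  have bIy: "\<bar>Iy\<bar> \<le> N * my"
    unfolding Iy_def my_def using set_int_bound[OF dm _ _ conty, of y R' N] bnd
    by (auto simp: By_def R'_def)
  have dpos: "(h / \<rho>) powr \<theta> \<ge> 0" by simp
  show ?thesis
  proof (cases "h < \<rho>")
    case False
    then have "1 \<le> (h / \<rho>) powr \<theta>" using rho th by (intro ge_one_powr_ge_zero) auto
    have "\<bar>Ix / mx\<bar> \<le> N" using bIx mxp by (simp add: abs_divide field_simps)
    moreover have "\<bar>Iy / my\<bar> \<le> N" using bIy mxp by (simp add: abs_divide field_simps)
    ultimately have "\<bar>Ix / mx - Iy / my\<bar> \<le> 2 * N" by linarith
    also have "\<dots> \<le> 12 * (1 + D^2) * N * (h / \<rho>) powr \<theta>"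
    proof -
      have "2 \<le> 12 * (1 + D^2)" using D by (simp add: add_increasing)
      also have "\<dots> \<le> 12 * (1 + D^2) * (h / \<rho>) powr \<theta>"
        using \<open>1 \<le> (h / \<rho>) powr \<theta>\<close> by (simp add: add_pos_nonneg)
      finally show ?thesis using N0 by (metis mult.commute mult.left_commute mult_left_mono)
    qed
    finally show ?thesis using Mx My h_def by simp
  next
    case True
    define S where "S = measure \<mu> (Bx - By) + measure \<mu> (By - Bx)"
    have dI: "\<bar>Ix - Iy\<bar> \<le> N * S"
      unfolding Ix_def Iy_def S_def
      by (rule set_int_diff[OF dm _ _ _ _ _ bnd[unfolded R_def[symmetric] R'_def[symmetric] Bx_def[symmetric] By_def[symmetric]]])
         (use cont in \<open>auto simp: Bx_def By_def R_def R'_def\<close>)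
    have dm1: "\<bar>mx - my\<bar> \<le> 1 * S"
    proof -
      have "\<bar>set_lebesgue_integral \<mu> Bx (\<lambda>_. 1::real) - set_lebesgue_integral \<mu> By (\<lambda>_. 1)\<bar> \<le> 1 * S"
        unfolding S_def
        by (rule set_int_diff[OF dm _ _ _ _ continuous_on_const]) (auto simp: Bx_def By_def)
      moreover have "set_lebesgue_integral \<mu> Bx (\<lambda>_. 1::real) = mx" "set_lebesgue_integral \<mu> By (\<lambda>_. 1::real) = my"
        using dm_space[OF dm] by (simp_all add: set_lebesgue_integral_def mx_def my_def)
      ultimately show ?thesis by simp
    qed
    have alg: "Ix / mx - Iy / my = (Ix - Iy) / mx + Iy * (my - mx) / (mx * my)"
      using mxp by (simp add: field_simps)
    have "\<bar>Ix / mx - Iy / my\<bar> \<le> \<bar>Ix - Iy\<bar> / mx + \<bar>Iy\<bar> * \<bar>my - mx\<bar> / (mx * my)"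
      unfolding alg using mxp by (simp add: abs_divide abs_mult abs_triangle_ineq order_trans[OF abs_triangle_ineq])
    also have "\<dots> \<le> N * S / mx + N * my * S / (mx * my)"
      using dI dm1 bIy mxp N0
      by (intro add_mono divide_right_mono mult_mono) (auto simp: abs_minus_commute)
    also have "\<dots> = 2 * N * S / mx" using mxp by (simp add: field_simps)
    finally have step: "\<bar>Ix / mx - Iy / my\<bar> \<le> 2 * N * S / mx" .
    have hR: "h < R" "h < R'" using True rho by (auto simp: R_def R'_def)
    have h0: "h \<ge> 0" by (simp add: h_def)
    have pw: "(2 * h / Q) powr \<theta> \<le> 2 * (h / \<rho>) powr \<theta>" if "\<rho> \<le> Q" for Q
    proof -
      have "(2 * h / Q) powr \<theta> \<le> (2 * h / \<rho>) powr \<theta>"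
        using that rho h0 th by (intro powr_mono2) (auto simp: divide_left_mono)
      also have "\<dots> = 2 powr \<theta> * (h / \<rho>) powr \<theta>" by (simp add: powr_mult[symmetric])
      also have "2 powr \<theta> \<le> 2" using powr_mono[of \<theta> 1 2] th by simp
      finally show ?thesis by (simp add: mult_right_mono)
    qed
    have s1: "measure \<mu> (Bx - By) \<le> 6 * (h / \<rho>) powr \<theta> * mx"
    proof -
      have "Bx - By \<subseteq> ball x R - ball x (R - 2 * h)"
      proof
        fix z assume z: "z \<in> Bx - By"
        then have "dist y z \<ge> R'" "dist x z < R" by (auto simp: Bx_def By_def)
        moreover have "dist y z \<le> dist y x + dist x z" by (rule dist_triangle)
        ultimately show "z \<in> ball x R - ball x (R - 2 * h)"
          using rl by (auto simp: h_def R_def R'_def dist_commute)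
      qed
      then have "measure \<mu> (Bx - By) \<le> measure \<mu> (ball x R - ball x (R - 2 * h))"
        by (rule dm_mono2[OF dm _ _, of _ _ x R]) (auto simp: Bx_def By_def)
      also have "\<dots> \<le> 3 * (2 * h / R) powr \<theta> * mx"
        using dec[where a=x and R=R and s="2 * h"] Rp h0 by (simp add: mx_def Bx_def)
      also have "\<dots> \<le> 3 * (2 * (h / \<rho>) powr \<theta>) * mx"
        using pw[of R] rho mxp by (intro mult_right_mono mult_left_mono) (auto simp: R_def)
      finally show ?thesis by simp
    qed
    have s2: "measure \<mu> (By - Bx) \<le> 6 * (h / \<rho>) powr \<theta> * my"
    proof -
      have "By - Bx \<subseteq> ball y R' - ball y (R' - 2 * h)"
      proof
        fix z assume z: "z \<in> By - Bx"
        then have "dist x z \<ge> R" "dist y z < R'" by (auto simp: Bx_def By_def)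
        moreover have "dist x z \<le> dist x y + dist y z" by (rule dist_triangle)
        ultimately show "z \<in> ball y R' - ball y (R' - 2 * h)"
          using rl by (auto simp: h_def R_def R'_def dist_commute)
      qed
      then have "measure \<mu> (By - Bx) \<le> measure \<mu> (ball y R' - ball y (R' - 2 * h))"
        by (rule dm_mono2[OF dm _ _, of _ _ y R']) (auto simp: Bx_def By_def)
      also have "\<dots> \<le> 3 * (2 * h / R') powr \<theta> * my"
        using dec[where a=y and R=R' and s="2 * h"] Rp h0 by (simp add: my_def By_def)
      also have "\<dots> \<le> 3 * (2 * (h / \<rho>) powr \<theta>) * my"
        using pw[of R'] rho mxp by (intro mult_right_mono mult_left_mono) (auto simp: R'_def)
      finally show ?thesis by simp
    qed
    have myb: "my \<le> D^2 * mx"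
    proof -
      have "By \<subseteq> ball x (2 * (2 * R))"
      proof
        fix z assume "z \<in> By"
        then have "dist y z < R'" by (simp add: By_def)
        moreover have "dist x z \<le> dist x y + dist y z" by (rule dist_triangle)
        ultimately show "z \<in> ball x (2 * (2 * R))" using rl hR by (auto simp: h_def R_def R'_def)
      qed
      then have "my \<le> measure \<mu> (ball x (2 * (2 * R)))"
        unfolding my_def by (intro dm_mono[OF dm]) (auto simp: By_def)
      also have "\<dots> \<le> D * measure \<mu> (ball x (2 * R))" using dbl[of "2 * R" x] Rp by simp
      also have "\<dots> \<le> D * (D * mx)" using dbl[of R x] Rp D by (intro mult_left_mono) (auto simp: mx_def Bx_def)
      finally show ?thesis by (simp add: power2_eq_square mult.assoc)
    qed
    have "S \<le> 6 * (h / \<rho>) powr \<theta> * mx + 6 * (h / \<rho>) powr \<theta> * (D^2 * mx)"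
      unfolding S_def using s1 s2 myb dpos by (smt (verit) mult_left_mono zero_le_numeral mult_nonneg_nonneg)
    also have "\<dots> = 6 * (1 + D^2) * (h / \<rho>) powr \<theta> * mx" by (simp add: algebra_simps)
    finally have Sb: "S \<le> 6 * (1 + D^2) * (h / \<rho>) powr \<theta> * mx" .
    have "2 * N * S / mx \<le> 2 * N * (6 * (1 + D^2) * (h / \<rho>) powr \<theta> * mx) / mx"
      using Sb N0 mxp by (intro divide_right_mono mult_left_mono) auto
    also have "\<dots> = 12 * (1 + D^2) * N * (h / \<rho>) powr \<theta>" using mxp by (simp add: field_simps)
    finally show ?thesis using step Mx My h_def by simp
  qed
qed


lemma ball_bdist:
  fixes \<Omega> :: "'a::euclidean_space set"
  assumes "open \<Omega>" "x \<in> \<Omega>" "\<rho> \<le> bdist \<Omega> x"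
  shows "ball x \<rho> \<subseteq> \<Omega>"
proof
  fix z assume z: "z \<in> ball x \<rho>"
  show "z \<in> \<Omega>"
  proof (rule ccontr)
    assume "z \<notin> \<Omega>"
    have "0 < \<rho>" using z by (smt (verit) mem_ball zero_le_dist)
    then have "x \<in> ball x \<rho>" by simp
    have "ball x \<rho> \<inter> frontier \<Omega> \<noteq> {}"
    proof (rule connected_Int_frontier)
      show "ball x \<rho> \<inter> \<Omega> \<noteq> {}" using \<open>x \<in> ball x \<rho>\<close> assms(2) by blast
      show "ball x \<rho> - \<Omega> \<noteq> {}" using z \<open>z \<notin> \<Omega>\<close> by blast
    qed simp
    then obtain p where p: "p \<in> ball x \<rho>" "p \<in> frontier \<Omega>" by blast
    have "infdist x (frontier \<Omega>) \<le> dist x p" by (rule infdist_le[OF p(2)])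
    then show False using p(1) assms(3) by (simp add: bdist_def)
  qed
qed

lemma modulus_inf:
  fixes u :: "'a::euclidean_space \<Rightarrow> real" and E :: "'a set"
  defines "W \<equiv> {\<omega>. concave_modulus \<omega> \<and> (\<forall>x\<in>E. \<forall>y\<in>E. \<bar>u x - u y\<bar> \<le> \<omega> (dist x y))}"
  assumes ne: "W \<noteq> {}"
  obtains \<omega>s where "\<omega>s \<in> W" "\<And>t. t \<ge> 0 \<Longrightarrow> lowest_modulus u E t = ereal (\<omega>s t)"
proof -
  define \<omega>s where "\<omega>s s = Inf ((\<lambda>\<omega>. \<omega> s) ` W)" for s
  have cm: "concave_modulus \<omega>" if "\<omega> \<in> W" for \<omega> using that by (simp add: W_def)
  have nn: "\<omega> s \<ge> 0" if "\<omega> \<in> W" "s \<ge> 0" for \<omega> s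
    using cm[OF that(1)] that(2) by (simp add: concave_modulus_def)
  have bdd: "bdd_below ((\<lambda>\<omega>. \<omega> s) ` W)" if "s \<ge> 0" for s
    using nn that by (intro bdd_belowI[of _ 0]) auto
  have low: "\<omega>s s \<le> \<omega> s" if "\<omega> \<in> W" "s \<ge> 0" for \<omega> s
    unfolding \<omega>s_def using bdd[OF that(2)] that(1) by (intro cInf_lower) auto
  have great: "c \<le> \<omega>s s" if "\<And>\<omega>. \<omega> \<in> W \<Longrightarrow> c \<le> \<omega> s" for c s
    unfolding \<omega>s_def using ne that by (intro cInf_greatest) auto
  have "\<omega>s \<in> W"
    unfolding W_def concave_modulus_def
  proof (intro CollectI conjI ballI allI impI)
    show "mono_on {0..} \<omega>s"
    proof (rule mono_onI)
      fix s s' :: real assume "s \<in> {0..}" "s' \<in> {0..}" "s \<le> s'"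
      then show "\<omega>s s \<le> \<omega>s s'"
      proof (intro great)
        fix \<omega> assume w: "\<omega> \<in> W"
        have "\<omega> s \<le> \<omega> s'" using cm[OF w] \<open>s \<in> {0..}\<close> \<open>s' \<in> {0..}\<close> \<open>s \<le> s'\<close>
          unfolding concave_modulus_def mono_on_def by auto
        then show "\<omega>s s \<le> \<omega> s'" using low[OF w] \<open>s \<in> {0..}\<close> by force
      qed
    qed
    show "concave_on {0..} \<omega>s"
      unfolding concave_on_iff
    proof (intro conjI ballI allI impI)
      fix x y a b :: real assume xy: "x \<in> {0..}" "y \<in> {0..}" and ab: "a \<ge> 0" "b \<ge> 0" "a + b = 1"
      show "a * \<omega>s x + b * \<omega>s y \<le> \<omega>s (a *\<^sub>R x + b *\<^sub>R y)"
      proof (rule great)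
        fix \<omega> assume w: "\<omega> \<in> W"
        have "a * \<omega>s x + b * \<omega>s y \<le> a * \<omega> x + b * \<omega> y"
          using low[OF w] xy ab by (intro add_mono mult_left_mono) auto
        also have "\<dots> \<le> \<omega> (a *\<^sub>R x + b *\<^sub>R y)"
          using cm[OF w] xy ab unfolding concave_modulus_def concave_on_iff by blast
        finally show "a * \<omega>s x + b * \<omega>s y \<le> \<omega> (a *\<^sub>R x + b *\<^sub>R y)" .
      qed
    qed (simp add: convex_real_interval)
    show "\<omega>s 0 = 0"
    proof -
      obtain \<omega> where w: "\<omega> \<in> W" using ne by blast
      have "\<omega>s 0 \<le> \<omega> 0" by (rule low[OF w]) simp
      moreover have "\<omega> 0 = 0" using cm[OF w] by (simp add: concave_modulus_def)
      moreover have "0 \<le> \<omega>s 0" using nn by (intro great) auto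
      ultimately show ?thesis by simp
    qed
    fix t :: real assume "t \<ge> 0"
    then show "0 \<le> \<omega>s t" using nn by (intro great) auto
  next
    fix x y assume "x \<in> E" "y \<in> E"
    then show "\<bar>u x - u y\<bar> \<le> \<omega>s (dist x y)"
      by (intro great) (auto simp: W_def)
  qed
  moreover have "lowest_modulus u E t = ereal (\<omega>s t)" if "t \<ge> 0" for t
  proof (rule antisym)
    show "lowest_modulus u E t \<le> ereal (\<omega>s t)"
      unfolding lowest_modulus_def W_def[symmetric] using \<open>\<omega>s \<in> W\<close> by (rule INF_lower)
    show "ereal (\<omega>s t) \<le> lowest_modulus u E t"
      unfolding lowest_modulus_def W_def[symmetric] using low that by (intro INF_greatest) auto
  qed
  ultimately show ?thesis using that by blast
qed

lemma modulus_empty: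
  fixes u :: "'a::euclidean_space \<Rightarrow> real"
  assumes "{\<omega>. concave_modulus \<omega> \<and> (\<forall>x\<in>E. \<forall>y\<in>E. \<bar>u x - u y\<bar> \<le> \<omega> (dist x y))} = {}"
  shows "lowest_modulus u E t = \<infinity>"
  unfolding lowest_modulus_def assms by (simp add: top_ereal_def)

lemma concave_modulus_comb:
  assumes "concave_modulus \<omega>1" "0 \<le> \<alpha>" "\<alpha> \<le> 1" "0 \<le> K" "0 < \<theta>" "\<theta> \<le> 1"
  shows "concave_modulus (\<lambda>s. \<alpha> * \<omega>1 s + (1 - \<alpha>) * (K * s powr \<theta>))"
  unfolding concave_modulus_def
proof (intro conjI allI impI)
  show "mono_on {0..} (\<lambda>s. \<alpha> * \<omega>1 s + (1 - \<alpha>) * (K * s powr \<theta>))"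
  proof (rule mono_onI)
    fix s s' :: real assume ss: "s \<in> {0..}" "s' \<in> {0..}" "s \<le> s'"
    have "\<omega>1 s \<le> \<omega>1 s'" using assms(1) ss unfolding concave_modulus_def mono_on_def by auto
    moreover have "s powr \<theta> \<le> s' powr \<theta>" using ss assms by (intro powr_mono2) auto
    ultimately show "\<alpha> * \<omega>1 s + (1 - \<alpha>) * (K * s powr \<theta>) \<le> \<alpha> * \<omega>1 s' + (1 - \<alpha>) * (K * s' powr \<theta>)"
      using assms by (intro add_mono mult_left_mono) auto
  qed
  show "concave_on {0..} (\<lambda>s. \<alpha> * \<omega>1 s + (1 - \<alpha>) * (K * s powr \<theta>))"
    using assms(1) powr_concave[OF assms(5,6)] assms(2-4) unfolding concave_modulus_def
    by (intro concave_on_add concave_on_cmul) auto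
  show "\<alpha> * \<omega>1 0 + (1 - \<alpha>) * (K * 0 powr \<theta>) = 0" using assms(1) by (simp add: concave_modulus_def)
  fix t :: real assume "t \<ge> 0"
  then show "0 \<le> \<alpha> * \<omega>1 t + (1 - \<alpha>) * (K * t powr \<theta>)"
    using assms unfolding concave_modulus_def by (intro add_nonneg_nonneg mult_nonneg_nonneg) auto
qed


lemma main_est:
  fixes \<mu> :: "'a::euclidean_space measure" and \<Omega> :: "'a set" and r u :: "'a \<Rightarrow> real"
  assumes dm: "doubling_measure \<mu>" and D: "D \<ge> 1"
    and dbl: "\<And>a s. s > 0 \<Longrightarrow> measure \<mu> (ball a (2 * s)) \<le> D * measure \<mu> (ball a s)"
    and th: "0 < \<theta>" "\<theta> \<le> 1"
    and dec: "\<And>a R s. R > 0 \<Longrightarrow> 0 \<le> s \<Longrightarrow>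
       measure \<mu> (ball a R - ball a (R - s)) \<le> 3 * (s / R) powr \<theta> * measure \<mu> (ball a R)"
    and \<alpha>: "0 \<le> \<alpha>" "\<alpha> < 1" and \<epsilon>: "0 < \<epsilon>" "\<epsilon> < 1 - \<alpha>" and \<beta>: "\<beta> \<ge> 1" and lam: "0 < lam"
    and \<Omega>o: "open \<Omega>" and \<Omega>ne: "\<Omega> \<noteq> {}" and \<Omega>b: "bounded \<Omega>" and adm: "admissible_radius \<Omega> r"
    and rl: "\<forall>x\<in>\<Omega>. \<forall>y\<in>\<Omega>. \<bar>r x - r y\<bar> \<le> dist x y"
    and rb: "\<forall>x\<in>\<Omega>. lam * bdist \<Omega> x powr \<beta> \<le> r x \<and> r x \<le> \<epsilon> * bdist \<Omega> x"
    and uc: "continuous_on (closure \<Omega>) u" and t: "0 \<le> t"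
  shows "lowest_modulus (Top \<alpha> \<mu> r u) (Omega_n \<Omega> \<epsilon> n) t
           \<le> ereal \<alpha> * lowest_modulus u (Omega_n \<Omega> \<epsilon> (Suc n)) t
             + ereal ((1 - \<alpha>) * (12 * (1 + D^2)) * sup_norm \<Omega> u * lam powr (- \<theta>)
                 * (1 - \<epsilon>) powr (- (real n * \<beta> * \<theta>)) * t powr \<theta>)"
proof -
  define N where "N = sup_norm \<Omega> u"
  define En where "En = Omega_n \<Omega> \<epsilon> n"
  define En1 where "En1 = Omega_n \<Omega> \<epsilon> (Suc n)"
  define \<rho> where "\<rho> = lam * (1 - \<epsilon>) powr (real n * \<beta>)"
  define K where "K = 12 * (1 + D^2) * N * lam powr (- \<theta>) * (1 - \<epsilon>) powr (- (real n * \<beta> * \<theta>))"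
  define \<omega>2 where "\<omega>2 s = K * s powr \<theta>" for s
  have e1: "0 < 1 - \<epsilon>" "1 - \<epsilon> < 1" using \<alpha> \<epsilon> by auto
  have \<rho>pos: "\<rho> > 0" using lam e1 by (simp add: \<rho>_def)
  have cpt: "compact (closure \<Omega>)" using \<Omega>b by (simp add: compact_closure)
  have "compact ((\<lambda>x. \<bar>u x\<bar>) ` closure \<Omega>)"
    using cpt uc by (intro compact_continuous_image continuous_intros) auto
  then have bddN: "bdd_above ((\<lambda>x. \<bar>u x\<bar>) ` closure \<Omega>)"
    by (intro bounded_imp_bdd_above compact_imp_bounded)
  have bndu: "\<bar>u z\<bar> \<le> N" if "z \<in> closure \<Omega>" for z
    unfolding N_def sup_norm_def using bddN that by (intro cSUP_upper) auto
  have N0: "N \<ge> 0"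
  proof -
    obtain z where "z \<in> \<Omega>" using \<Omega>ne by blast
    then have "\<bar>u z\<bar> \<le> N" using bndu closure_subset by blast
    then show ?thesis by linarith
  qed
  have K0: "K \<ge> 0" using N0 D by (simp add: K_def)
  have xf: "x \<in> \<Omega> \<and> 0 < r x \<and> \<rho> \<le> r x \<and> ball x (r x) \<subseteq> \<Omega> \<and> ball x (r x) \<subseteq> En1" if x: "x \<in> En" for x
  proof -
    have x\<Omega>: "x \<in> \<Omega>" and bd: "bdist \<Omega> x > (1 - \<epsilon>)^n" using x by (auto simp: En_def Omega_n_def)
    have rp: "0 < r x" "r x \<le> bdist \<Omega> x" using adm x\<Omega> by (auto simp: admissible_radius_def)
    have rb1: "lam * bdist \<Omega> x powr \<beta> \<le> r x" "r x \<le> \<epsilon> * bdist \<Omega> x" using rb x\<Omega> by auto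
    have "(1 - \<epsilon>) powr (real n * \<beta>) = ((1 - \<epsilon>) ^ n) powr \<beta>"
      using e1 by (simp add: powr_powr[symmetric] powr_realpow)
    also have "\<dots> \<le> bdist \<Omega> x powr \<beta>" using bd \<beta> e1 by (intro powr_mono2) auto
    finally have "\<rho> \<le> r x" using rb1(1) lam by (smt (verit) \<rho>_def mult_left_mono)
    moreover have bsub: "ball x (r x) \<subseteq> \<Omega>" using ball_bdist[OF \<Omega>o x\<Omega> rp(2)] .
    moreover have "ball x (r x) \<subseteq> En1"
    proof
      fix z assume z: "z \<in> ball x (r x)"
      have "bdist \<Omega> x \<le> bdist \<Omega> z + dist x z" unfolding bdist_def by (rule infdist_triangle)
      then have "bdist \<Omega> z > bdist \<Omega> x - r x" using z by simp
      moreover have "bdist \<Omega> x - r x \<ge> (1 - \<epsilon>) * bdist \<Omega> x" using rb1(2) by (simp add: algebra_simps)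
      moreover have "(1 - \<epsilon>) * bdist \<Omega> x > (1 - \<epsilon>) * (1 - \<epsilon>)^n" using bd e1 by simp
      ultimately have "bdist \<Omega> z > (1 - \<epsilon>)^(Suc n)" by simp
      then show "z \<in> En1" using z bsub by (auto simp: En1_def Omega_n_def)
    qed
    ultimately show ?thesis using x\<Omega> rp by blast
  qed
  have omega2_eq: "12 * (1 + D^2) * N * (h / \<rho>) powr \<theta> = \<omega>2 h" if "h \<ge> 0" for h
  proof -
    have "\<rho> powr \<theta> = lam powr \<theta> * (1 - \<epsilon>) powr (real n * \<beta> * \<theta>)"
      using lam e1 by (simp add: \<rho>_def powr_mult powr_powr)
    then show ?thesis using that \<rho>pos lam e1
      by (simp add: \<omega>2_def K_def powr_divide powr_minus field_simps)
  qed
  have Mb: "\<bar>Mop \<mu> r u x - Mop \<mu> r u y\<bar> \<le> \<omega>2 (dist x y)" if "x \<in> En" "y \<in> En" for x y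
  proof -
    have fx: "x \<in> \<Omega>" "0 < r x" "\<rho> \<le> r x" "ball x (r x) \<subseteq> \<Omega>" using xf[OF that(1)] by auto
    have fy: "y \<in> \<Omega>" "0 < r y" "\<rho> \<le> r y" "ball y (r y) \<subseteq> \<Omega>" using xf[OF that(2)] by auto
    have sub: "ball x (r x) \<union> ball y (r y) \<subseteq> closure \<Omega>" using fx fy closure_subset by blast
    have "\<bar>Mop \<mu> r u x - Mop \<mu> r u y\<bar> \<le> 12 * (1 + D^2) * N * (dist x y / \<rho>) powr \<theta>"
    proof (rule M_bound[OF dm D dbl th dec \<rho>pos fx(3) fy(3)])
      show "\<bar>r x - r y\<bar> \<le> dist x y" using rl fx fy by blast
      show "continuous_on (ball x (r x) \<union> ball y (r y)) u" using uc sub by (rule continuous_on_subset)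
      show "\<forall>z\<in>ball x (r x) \<union> ball y (r y). \<bar>u z\<bar> \<le> N" using sub bndu by blast
    qed
    then show ?thesis using omega2_eq[of "dist x y"] by simp
  qed
  have famTop: "lowest_modulus (Top \<alpha> \<mu> r u) En t \<le> ereal (\<alpha> * \<omega>1 t + (1 - \<alpha>) * \<omega>2 t)"
    if cm1: "concave_modulus \<omega>1"
      and Sb: "\<And>x y. x \<in> En \<Longrightarrow> y \<in> En \<Longrightarrow> \<alpha> * \<bar>Sop r u x - Sop r u y\<bar> \<le> \<alpha> * \<omega>1 (dist x y)" for \<omega>1
  proof -
    define \<Phi> where "\<Phi> s = \<alpha> * \<omega>1 s + (1 - \<alpha>) * (K * s powr \<theta>)" for s
    have cm\<Phi>: "concave_modulus \<Phi>"
      unfolding \<Phi>_def using concave_modulus_comb[OF cm1 \<alpha>(1) _ K0 th] \<alpha> by simp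
    have "\<bar>Top \<alpha> \<mu> r u x - Top \<alpha> \<mu> r u y\<bar> \<le> \<Phi> (dist x y)" if "x \<in> En" "y \<in> En" for x y
    proof -
      have "Top \<alpha> \<mu> r u x - Top \<alpha> \<mu> r u y
          = \<alpha> * (Sop r u x - Sop r u y) + (1 - \<alpha>) * (Mop \<mu> r u x - Mop \<mu> r u y)"
        by (simp add: Top_def algebra_simps)
      then have "\<bar>Top \<alpha> \<mu> r u x - Top \<alpha> \<mu> r u y\<bar>
          \<le> \<alpha> * \<bar>Sop r u x - Sop r u y\<bar> + (1 - \<alpha>) * \<bar>Mop \<mu> r u x - Mop \<mu> r u y\<bar>"
        using \<alpha> by (simp add: abs_mult order_trans[OF abs_triangle_ineq])
      also have "\<dots> \<le> \<alpha> * \<omega>1 (dist x y) + (1 - \<alpha>) * \<omega>2 (dist x y)"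
        using Sb[OF that] Mb[OF that] \<alpha> by (intro add_mono[OF _ mult_left_mono]) auto
      finally show ?thesis by (simp add: \<Phi>_def \<omega>2_def)
    qed
    then have "\<Phi> \<in> {\<omega>. concave_modulus \<omega> \<and> (\<forall>x\<in>En. \<forall>y\<in>En. \<bar>Top \<alpha> \<mu> r u x - Top \<alpha> \<mu> r u y\<bar> \<le> \<omega> (dist x y))}"
      using cm\<Phi> by blast
    then have "lowest_modulus (Top \<alpha> \<mu> r u) En t \<le> ereal (\<Phi> t)"
      unfolding lowest_modulus_def by (rule INF_lower)
    then show ?thesis by (simp add: \<Phi>_def \<omega>2_def)
  qed
  have rhs_eq: "(1 - \<alpha>) * (12 * (1 + D^2)) * sup_norm \<Omega> u * lam powr (- \<theta>)
                 * (1 - \<epsilon>) powr (- (real n * \<beta> * \<theta>)) * t powr \<theta> = (1 - \<alpha>) * \<omega>2 t"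
    by (simp add: \<omega>2_def K_def N_def mult.assoc)
  define W where "W = {\<omega>. concave_modulus \<omega> \<and> (\<forall>x\<in>En1. \<forall>y\<in>En1. \<bar>u x - u y\<bar> \<le> \<omega> (dist x y))}"
  show ?thesis
  proof (cases "W = {}")
    case False
    obtain \<omega>s where ws: "\<omega>s \<in> W" and lm: "\<And>t. t \<ge> 0 \<Longrightarrow> lowest_modulus u En1 t = ereal (\<omega>s t)"
      using modulus_inf[where u=u and E=En1] False unfolding W_def by blast
    have cms: "concave_modulus \<omega>s" and bs: "\<forall>x\<in>En1. \<forall>y\<in>En1. \<bar>u x - u y\<bar> \<le> \<omega>s (dist x y)"
      using ws by (auto simp: W_def)
    have En1c: "En1 \<subseteq> closure \<Omega>" using closure_subset by (auto simp: En1_def Omega_n_def)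
    have bddA: "bdd_above (u ` En1)" using bndu En1c by (intro bdd_aboveI[of _ N]) (auto simp: abs_le_iff)
    have bddB: "bdd_below (u ` En1)" using bndu En1c by (intro bdd_belowI[of _ "- N"]) (force simp: abs_le_iff)
    have "lowest_modulus (Top \<alpha> \<mu> r u) En t \<le> ereal (\<alpha> * \<omega>s t + (1 - \<alpha>) * \<omega>2 t)"
    proof (rule famTop[OF cms])
      fix x y assume xy: "x \<in> En" "y \<in> En"
      have "\<bar>Sop r u x - Sop r u y\<bar> \<le> \<omega>s (dist x y)"
        using xf[OF xy(1)] xf[OF xy(2)] rl
        by (intro S_abs[OF cms bs _ _ _ _ _ bddA bddB]) auto
      then show "\<alpha> * \<bar>Sop r u x - Sop r u y\<bar> \<le> \<alpha> * \<omega>s (dist x y)" using \<alpha> by (intro mult_left_mono) auto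
    qed
    then show ?thesis unfolding rhs_eq lm[OF t, unfolded En1_def] by (simp add: En_def)
  next
    case True
    then have inf: "lowest_modulus u En1 t = \<infinity>" unfolding W_def by (rule modulus_empty)
    show ?thesis
    proof (cases "\<alpha> = 0")
      case False
      then have hinf: "ereal \<alpha> * lowest_modulus u En1 t = \<infinity>" using inf \<alpha> by simp
      show ?thesis unfolding En1_def[symmetric] hinf by simp
    next
      case True
      have cm0: "concave_modulus (\<lambda>s::real. 0::real)"
        by (simp add: concave_modulus_def concave_on_const convex_real_interval mono_on_def)
      have "lowest_modulus (Top \<alpha> \<mu> r u) En t \<le> ereal (\<alpha> * 0 + (1 - \<alpha>) * \<omega>2 t)"
        by (rule famTop[OF cm0]) (simp add: True)
      then show ?thesis unfolding rhs_eq inf[unfolded En1_def] using True by (simp add: En_def)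
    qed
  qed
qed


theorem proposition2p3:
  fixes \<mu> :: "'a::euclidean_space measure"
  assumes "doubling_measure \<mu>"
  shows "\<exists>C::real. C > 0 \<and> (\<exists>\<theta>::real. 0 < \<theta> \<and> \<theta> \<le> 1 \<and>
    (\<forall>(\<alpha>::real) (\<epsilon>::real) (\<beta>::real) (lam::real) (\<Omega>::'a set) (r::'a \<Rightarrow> real) (n0::nat).
      0 \<le> \<alpha> \<and> \<alpha> < 1 \<and> 0 < \<epsilon> \<and> \<epsilon> < 1 - \<alpha> \<and> \<beta> \<ge> 1 \<and>
      0 < lam \<and> lam < min \<epsilon> (1 / \<beta>) * (2 / diameter \<Omega>) powr (\<beta> - 1) \<and>
      open \<Omega> \<and> \<Omega> \<noteq> {} \<and> connected \<Omega> \<and> bounded \<Omega> \<and> convex \<Omega> \<and>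
      admissible_radius \<Omega> r \<and>
      (\<forall>x\<in>\<Omega>. \<forall>y\<in>\<Omega>. \<bar>r x - r y\<bar> \<le> dist x y) \<and>
      (\<forall>x\<in>\<Omega>. lam * bdist \<Omega> x powr \<beta> \<le> r x \<and> r x \<le> \<epsilon> * bdist \<Omega> x) \<and>
      (\<forall>n\<ge>n0. diameter (Omega_n \<Omega> \<epsilon> n) \<ge> diameter \<Omega> / 2)
      \<longrightarrow>
      (\<forall>(u::'a \<Rightarrow> real) (n::nat) (t::real).
         continuous_on (closure \<Omega>) u \<and> n \<ge> n0 \<and> 0 \<le> t \<and> t \<le> diameter \<Omega> / 2 \<longrightarrow>
         lowest_modulus (Top \<alpha> \<mu> r u) (Omega_n \<Omega> \<epsilon> n) t
           \<le> ereal \<alpha> * lowest_modulus u (Omega_n \<Omega> \<epsilon> (Suc n)) t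
             + ereal ((1 - \<alpha>) * C * sup_norm \<Omega> u * lam powr (- \<theta>)
                 * (1 - \<epsilon>) powr (- (real n * \<beta> * \<theta>)) * t powr \<theta>))))"
proof -
  obtain D where D: "D \<ge> 1"
    and dbl: "\<And>a s. s > 0 \<Longrightarrow> measure \<mu> (ball a (2 * s)) \<le> D * measure \<mu> (ball a s)"
    using dm_real_doubling[OF assms] by blast
  obtain \<theta> where th: "0 < \<theta>" "\<theta> \<le> 1"
    and dec: "\<And>a R s. R > 0 \<Longrightarrow> 0 \<le> s \<Longrightarrow>
       measure \<mu> (ball a R - ball a (R - s)) \<le> 3 * (s / R) powr \<theta> * measure \<mu> (ball a R)"
    using annular_decay[OF assms] by blast
  show ?thesis
    apply (rule exI[of _ "12 * (1 + D^2)"])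
    apply (intro conjI)
     apply (simp add: add_pos_nonneg)
    apply (rule exI[of _ \<theta>])
    apply (intro conjI th allI impI)
    apply (elim conjE)
    apply (rule main_est[OF assms D dbl th dec])
                   apply assumption+
    done
qed

end
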